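(* Let $\Omega$ be a domain in $\mathbb{R}^n$ and $1\le p\le\infty$. Let $f:\mathbb{R}\to\mathbb{R}$ be such that $f\circ u\in L^p(\Omega)$ for every $u\in H^2(\Omega)\cap H^1_0(\Omega)$, and suppose there is a constant $M>0$ with $\|f\circ u\|_{L^p(\Omega)}\le M$ for all $u\in H^2(\Omega)\cap H^1_0(\Omega)$. Then $f$ is bounded on $\mathbb{R}$: there exists $C>0$ with $|f(x)|\le C$ for all $x\in\mathbb{R}$.
   Context: $H^k(\Omega)$ denotes the Sobolev space $W^{k,2}(\Omega)$, and $H^1_0(\Omega)$ the closure of $C_c^\infty(\Omega)$ in $H^1(\Omega)$ (functions vanishing on the boundary). *)

theory Defs
  imports "HOL-Analysis.Analysis"
begin

definition pderiv :: "'a::euclidean_space \<Rightarrow> ('a \<Rightarrow> real) \<Rightarrow> 'a \<Rightarrow> real" where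
  "pderiv b f x = frechet_derivative f (at x) b"

fun Ck :: "nat \<Rightarrow> ('a::euclidean_space \<Rightarrow> real) \<Rightarrow> bool" where
  "Ck 0 f = continuous_on UNIV f"
| "Ck (Suc k) f = ((\<forall>x. f differentiable (at x)) \<and> continuous_on UNIV f \<and>
                   (\<forall>b\<in>Basis. Ck k (pderiv b f)))"

definition smooth :: "('a::euclidean_space \<Rightarrow> real) \<Rightarrow> bool" where
  "smooth f = (\<forall>k. Ck k f)"

definition test_fun :: "'a::euclidean_space set \<Rightarrow> ('a \<Rightarrow> real) \<Rightarrow> bool" where
  "test_fun \<Omega> \<phi> = (smooth \<phi> \<and> compact (closure {x. \<phi> x \<noteq> 0}) \<and> closure {x. \<phi> x \<noteq> 0} \<subseteq> \<Omega>)"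

definition L2 :: "'a::euclidean_space set \<Rightarrow> ('a \<Rightarrow> real) \<Rightarrow> bool" where
  "L2 \<Omega> u = (u \<in> borel_measurable (lebesgue_on \<Omega>) \<and> integrable (lebesgue_on \<Omega>) (\<lambda>x. (u x)^2))"

definition weak_pderiv :: "'a::euclidean_space set \<Rightarrow> 'a \<Rightarrow> ('a \<Rightarrow> real) \<Rightarrow> ('a \<Rightarrow> real) \<Rightarrow> bool" where
  "weak_pderiv \<Omega> b u g = (\<forall>\<phi>. test_fun \<Omega> \<phi> \<longrightarrow>
      integrable (lebesgue_on \<Omega>) (\<lambda>x. u x * pderiv b \<phi> x) \<and>
      integrable (lebesgue_on \<Omega>) (\<lambda>x. g x * \<phi> x) \<and>
      (\<integral>x. u x * pderiv b \<phi> x \<partial>lebesgue_on \<Omega>) = - (\<integral>x. g x * \<phi> x \<partial>lebesgue_on \<Omega>))"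

definition H1 :: "'a::euclidean_space set \<Rightarrow> ('a \<Rightarrow> real) \<Rightarrow> bool" where
  "H1 \<Omega> u = (L2 \<Omega> u \<and> (\<forall>b\<in>Basis. \<exists>g. L2 \<Omega> g \<and> weak_pderiv \<Omega> b u g))"

definition H2 :: "'a::euclidean_space set \<Rightarrow> ('a \<Rightarrow> real) \<Rightarrow> bool" where
  "H2 \<Omega> u = (L2 \<Omega> u \<and> (\<forall>b\<in>Basis. \<exists>g. L2 \<Omega> g \<and> weak_pderiv \<Omega> b u g \<and>
        (\<forall>c\<in>Basis. \<exists>h. L2 \<Omega> h \<and> weak_pderiv \<Omega> c g h)))"

definition H10 :: "'a::euclidean_space set \<Rightarrow> ('a \<Rightarrow> real) \<Rightarrow> bool" where
  "H10 \<Omega> u = (H1 \<Omega> u \<and> (\<exists>\<phi>s. (\<forall>k. test_fun \<Omega> (\<phi>s k)) \<and>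
      ((\<lambda>k. \<integral>x. (\<phi>s k x - u x)^2 \<partial>lebesgue_on \<Omega>) \<longlonglongrightarrow> 0) \<and>
      (\<forall>b\<in>Basis. \<exists>g. L2 \<Omega> g \<and> weak_pderiv \<Omega> b u g \<and>
          ((\<lambda>k. \<integral>x. (pderiv b (\<phi>s k) x - g x)^2 \<partial>lebesgue_on \<Omega>) \<longlonglongrightarrow> 0))))"

definition Lp :: "ennreal \<Rightarrow> 'a::euclidean_space set \<Rightarrow> ('a \<Rightarrow> real) \<Rightarrow> bool" where
  "Lp p \<Omega> v = (v \<in> borel_measurable (lebesgue_on \<Omega>) \<and>
     (if p = \<infinity> then (\<exists>C. AE x in lebesgue_on \<Omega>. \<bar>v x\<bar> \<le> C)
      else integrable (lebesgue_on \<Omega>) (\<lambda>x. \<bar>v x\<bar> powr enn2real p)))"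

definition Lp_norm :: "ennreal \<Rightarrow> 'a::euclidean_space set \<Rightarrow> ('a \<Rightarrow> real) \<Rightarrow> real" where
  "Lp_norm p \<Omega> v = (if p = \<infinity> then Inf {C. 0 \<le> C \<and> (AE x in lebesgue_on \<Omega>. \<bar>v x\<bar> \<le> C)}
      else (\<integral>x. \<bar>v x\<bar> powr enn2real p \<partial>lebesgue_on \<Omega>) powr (1 / enn2real p))"

end

theory Submission
  imports Defs
begin


definition E :: "nat \<Rightarrow> real \<Rightarrow> real" where
  "E n t = (if t > 0 then exp (- 1 / t) / t ^ n else 0)"

lemma E_lim: "((\<lambda>y::real. exp (- 1 / y) / y ^ m) \<longlongrightarrow> 0) (at_right 0)"
proof -
  have "(((\<lambda>z::real. z ^ m / exp z) \<circ> inverse) \<longlongrightarrow> 0) (at_right 0)"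
    using filterlim_compose[OF tendsto_power_div_exp_0 filterlim_inverse_at_top_right] by (simp add: o_def)
  then show ?thesis
    apply (rule Lim_transform_eventually)
    apply (rule eventually_at_rightI[where b=1])
    by (auto simp: field_simps power_inverse exp_minus_inverse)
qed

lemma E_deriv: "(E n has_real_derivative (E (n+2) t - real n * E (n+1) t)) (at t)"
proof (cases "t > 0")
  case True
  have "((\<lambda>t. exp (- 1 / t) / t ^ n) has_real_derivative (E (n+2) t - real n * E (n+1) t)) (at t)"
    using True
    apply (auto intro!: derivative_eq_intros simp: E_def)
    apply (cases n)
     apply (auto simp: field_simps power2_eq_square)
    done
  then show ?thesis
    by (rule has_field_derivative_transform_within_open[where S="{0<..}"]) (use True in \<open>auto simp: E_def\<close>)
next
  case False
  show ?thesis
  proof (cases "t < 0")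
    case True
    have "((\<lambda>t. 0) has_real_derivative (E (n+2) t - real n * E (n+1) t)) (at t)" using True by (simp add: E_def)
    then show ?thesis
      by (rule has_field_derivative_transform_within_open[where S="{..<0}"]) (use True in \<open>auto simp: E_def\<close>)
  next
    case False
    with \<open>\<not> t > 0\<close> have t: "t = 0" by auto
    have "((\<lambda>y. (E n y - E n 0) / (y - 0)) \<longlongrightarrow> 0) (at 0)"
    proof (rule filterlim_split_at)
      show "((\<lambda>y. (E n y - E n 0) / (y - 0)) \<longlongrightarrow> 0) (at_left 0)"
        apply (rule Lim_transform_eventually[OF tendsto_const])
        apply (rule eventually_at_leftI[where a="-1"])
        by (auto simp: E_def)
      show "((\<lambda>y. (E n y - E n 0) / (y - 0)) \<longlongrightarrow> 0) (at_right 0)"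
        apply (rule Lim_transform_eventually[OF E_lim[of "Suc n"]])
        apply (rule eventually_at_rightI[where b="1"])
        by (auto simp: E_def field_simps)
    qed
    then show ?thesis using t by (simp add: has_field_derivative_iff E_def)
  qed
qed



inductive_set SF :: "('a::euclidean_space \<Rightarrow> real) set" where
  cnst: "(\<lambda>x. c) \<in> SF"
| lin: "(\<lambda>x. x \<bullet> c) \<in> SF"
| sq: "(\<lambda>x. x \<bullet> x) \<in> SF"
| add: "f \<in> SF \<Longrightarrow> g \<in> SF \<Longrightarrow> (\<lambda>x. f x + g x) \<in> SF"
| mul: "f \<in> SF \<Longrightarrow> g \<in> SF \<Longrightarrow> (\<lambda>x. f x * g x) \<in> SF"
| ee: "f \<in> SF \<Longrightarrow> (\<lambda>x. E n (f x)) \<in> SF"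
| inv: "f \<in> SF \<Longrightarrow> (\<forall>x. f x > 0) \<Longrightarrow> (\<lambda>x. inverse (f x)) \<in> SF"

lemma SF_deriv: "f \<in> SF \<Longrightarrow> \<exists>f'. (\<forall>x. (f has_derivative f' x) (at x)) \<and> (\<forall>b. (\<lambda>x. f' x b) \<in> SF)"
proof (induction rule: SF.induct)
  case (cnst c)
  show ?case by (rule exI[of _ "\<lambda>x v. 0"]) (auto intro: SF.cnst)
next
  case (lin c)
  show ?case by (rule exI[of _ "\<lambda>x v. v \<bullet> c"]) (auto intro!: SF.cnst derivative_eq_intros)
next
  case sq
  show ?case
  proof (rule exI[of _ "\<lambda>x v. x \<bullet> v + v \<bullet> x"], intro conjI allI)
    fix x :: 'a show "((\<lambda>x. x \<bullet> x) has_derivative (\<lambda>v. x \<bullet> v + v \<bullet> x)) (at x)"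
      by (auto intro!: derivative_eq_intros)
  next
    fix b :: 'a
    have "(\<lambda>x. x \<bullet> b + x \<bullet> b) \<in> SF" by (intro SF.intros)
    then show "(\<lambda>x::'a. x \<bullet> b + b \<bullet> x) \<in> SF" by (simp add: inner_commute)
  qed
next
  case (add f g)
  then obtain f' g' where f: "\<forall>x. (f has_derivative f' x) (at x)" "\<forall>b. (\<lambda>x. f' x b) \<in> SF"
    and g: "\<forall>x. (g has_derivative g' x) (at x)" "\<forall>b. (\<lambda>x. g' x b) \<in> SF" by blast
  show ?case
    by (rule exI[of _ "\<lambda>x v. f' x v + g' x v"]) (use f g in \<open>auto intro!: SF.intros derivative_eq_intros\<close>)
next
  case (mul f g)
  then obtain f' g' where f: "\<forall>x. (f has_derivative f' x) (at x)" "\<forall>b. (\<lambda>x. f' x b) \<in> SF"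
    and g: "\<forall>x. (g has_derivative g' x) (at x)" "\<forall>b. (\<lambda>x. g' x b) \<in> SF" by blast
  show ?case
    by (rule exI[of _ "\<lambda>x v. f x * g' x v + f' x v * g x"])
      (use f g mul.hyps in \<open>auto intro!: SF.intros derivative_eq_intros\<close>)
next
  case (ee f n)
  then obtain f' where f: "\<forall>x. (f has_derivative f' x) (at x)" "\<forall>b. (\<lambda>x. f' x b) \<in> SF" by blast
  show ?case
  proof (rule exI[of _ "\<lambda>x v. f' x v * (E (n+2) (f x) + (- real n) * E (n+1) (f x))"], intro conjI allI)
    fix x show "((\<lambda>x. E n (f x)) has_derivative (\<lambda>v. f' x v * (E (n+2) (f x) + (- real n) * E (n+1) (f x)))) (at x)"
      using DERIV_compose_FDERIV[OF E_deriv f(1)[rule_format]] by simp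
  next
    fix b show "(\<lambda>x. f' x b * (E (n + 2) (f x) + - real n * E (n + 1) (f x))) \<in> SF"
      using f ee.hyps by (intro SF.intros) auto
  qed
next
  case (inv f)
  then obtain f' where f: "\<forall>x. (f has_derivative f' x) (at x)" "\<forall>b. (\<lambda>x. f' x b) \<in> SF" by blast
  show ?case
  proof (rule exI[of _ "\<lambda>x v. f' x v * ((-1) * (inverse (f x) * inverse (f x)))"], intro conjI allI)
    fix x
    have "f x \<noteq> 0" using inv.hyps(2) by (metis less_irrefl)
    from DERIV_compose_FDERIV[OF DERIV_inverse[OF this] f(1)[rule_format]]
    show "((\<lambda>x. inverse (f x)) has_derivative (\<lambda>v. f' x v * ((-1) * (inverse (f x) * inverse (f x))))) (at x)"
      by (simp add: power2_eq_square)
  next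
    fix b show "(\<lambda>x. f' x b * ((-1) * (inverse (f x) * inverse (f x)))) \<in> SF"
      using f inv.hyps by (intro SF.intros) auto
  qed
qed

lemma SF_Ck: "f \<in> SF \<Longrightarrow> Ck k f"
proof (induction k arbitrary: f)
  case 0
  then obtain f' where "\<forall>x. (f has_derivative f' x) (at x)" using SF_deriv by blast
  then show ?case
    by (auto intro!: differentiable_imp_continuous_on simp: differentiable_on_def differentiable_def) blast
next
  case (Suc k)
  then obtain f' where f: "\<forall>x. (f has_derivative f' x) (at x)" "\<forall>b. (\<lambda>x. f' x b) \<in> SF" using SF_deriv by blast
  have pd: "pderiv b f = (\<lambda>x. f' x b)" for b
    using f(1) frechet_derivative_at by (metis pderiv_def)
  show ?case using f Suc.IH
    by (auto simp: pd differentiable_def intro!: differentiable_imp_continuous_on simp: differentiable_on_def) blast+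
qed

lemma SF_smooth: "f \<in> SF \<Longrightarrow> smooth f"
  using SF_Ck smooth_def by blast



lemma E0_nonneg: "E 0 t \<ge> 0" by (simp add: E_def)
lemma E0_pos: "t > 0 \<Longrightarrow> E 0 t > 0" by (simp add: E_def)
lemma E0_zero: "t \<le> 0 \<Longrightarrow> E 0 t = 0" by (simp add: E_def)

definition rho :: "'a::euclidean_space \<Rightarrow> 'a \<Rightarrow> real" where
  "rho a x = x \<bullet> x + (-2) * (x \<bullet> a) + a \<bullet> a"

lemma rho_eq: "rho a x = (norm (x - a))^2"
  by (simp add: rho_def power2_norm_eq_inner inner_diff inner_commute)

definition bump :: "'a::euclidean_space \<Rightarrow> real \<Rightarrow> real \<Rightarrow> real \<Rightarrow> 'a \<Rightarrow> real" where
  "bump a r1 r2 t x = t * (E 0 (r2 + (-1) * rho a x) * inverse (E 0 (r2 + (-1) * rho a x) + E 0 (rho a x + (- r1))))"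

lemma denom_pos: "r1 < r2 \<Longrightarrow> 0 < E 0 (r2 + (-1) * s) + E 0 (s + (- r1))"
proof (cases "s < r2")
  case True
  then show ?thesis using E0_pos[of "r2 + (-1) * s"] E0_nonneg[of "s + (- r1)"] by simp
next
  case False
  assume "r1 < r2"
  then show ?thesis using False E0_pos[of "s + (- r1)"] E0_nonneg[of "r2 + (-1) * s"] by simp
qed

lemma bump_SF: "r1 < r2 \<Longrightarrow> bump a r1 r2 t \<in> SF"
  unfolding bump_def rho_def
  by (intro SF.intros allI denom_pos)

lemma bump_one: "r1 < r2 \<Longrightarrow> rho a x \<le> r1 \<Longrightarrow> bump a r1 r2 t x = t"
  using E0_pos[of "r2 + (-1) * rho a x"] E0_zero[of "rho a x + (- r1)"]
  by (simp add: bump_def)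

lemma bump_zero: "r2 \<le> rho a x \<Longrightarrow> bump a r1 r2 t x = 0"
  using E0_zero[of "r2 + (-1) * rho a x"] by (simp add: bump_def)

lemma bump_test:
  assumes "0 < r" "cball a r \<subseteq> \<Omega>"
  shows "test_fun \<Omega> (bump a ((r/2)^2) (r^2) t)"
proof -
  have lt: "(r/2)^2 < r^2" using assms(1) by (simp add: power_divide)
  have sub: "{x. bump a ((r/2)^2) (r^2) t x \<noteq> 0} \<subseteq> ball a r"
  proof
    fix x assume "x \<in> {x. bump a ((r/2)^2) (r^2) t x \<noteq> 0}"
    then have "\<not> r^2 \<le> rho a x" using bump_zero by blast
    then have "(norm (x - a))^2 < r^2" by (simp add: rho_eq)
    then have "norm (x - a) < r" using assms(1) by (simp add: power_less_imp_less_base)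
    then show "x \<in> ball a r" by (simp add: dist_norm norm_minus_commute)
  qed
  have c: "closure {x. bump a ((r/2)^2) (r^2) t x \<noteq> 0} \<subseteq> cball a r"
    using sub ball_subset_cball by (intro closure_minimal) auto
  show ?thesis unfolding test_fun_def
    using SF_smooth[OF bump_SF[OF lt]] c assms(2)
    by (auto intro!: compact_closure[THEN iffD2] bounded_subset[OF bounded_ball sub])
qed



lemma cont_cs_integrable:
  fixes g :: "'a::euclidean_space \<Rightarrow> real"
  assumes "continuous_on UNIV g" "compact K" "\<And>x. x \<notin> K \<Longrightarrow> g x = 0"
  shows "integrable lborel g"
proof -
  have "integrable lborel (\<lambda>x. indicator K x *\<^sub>R g x)"
    using assms by (intro borel_integrable_compact) (auto intro: continuous_on_subset)
  also have "(\<lambda>x. indicator K x *\<^sub>R g x) = g"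
    using assms(3) by (auto simp: fun_eq_iff indicator_def)
  finally show ?thesis .
qed

lemma int_shift:
  fixes w :: "'a::euclidean_space \<Rightarrow> real"
  assumes "continuous_on UNIV w"
  shows "integral\<^sup>L lborel (\<lambda>x. w (c + x)) = integral\<^sup>L lborel w"
proof -
  have "integral\<^sup>L lborel w = integral\<^sup>L (distr lborel borel ((+) c)) w"
    by (simp add: lborel_distr_plus)
  also have "\<dots> = integral\<^sup>L lborel (\<lambda>x. w (c + x))"
    by (rule integral_distr) (auto intro: borel_measurable_continuous_onI assms)
  finally show ?thesis by simp
qed

lemma int_deriv_zero:
  fixes w :: "'a::euclidean_space \<Rightarrow> real"
  assumes d: "\<And>x. (w has_derivative W x) (at x)"
    and c: "continuous_on UNIV (\<lambda>x. W x b)"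
    and K: "compact K" and z: "\<And>x. x \<notin> K \<Longrightarrow> w x = 0"
  shows "integral\<^sup>L lborel (\<lambda>x. W x b) = 0"
proof -
  have wc: "continuous_on UNIV w"
    using d by (meson continuous_on_eq_continuous_within has_derivative_continuous has_derivative_at_withinI)
  have wi: "integrable lborel w" using cont_cs_integrable[OF wc K z] .
  obtain R where R0: "\<And>x. x \<in> K \<Longrightarrow> norm x \<le> R" "0 < R"
    using compact_imp_bounded[OF K] bounded_pos by metis
  have R: "K \<subseteq> cball 0 R" "0 \<le> R" using R0 by auto
  define L where "L = cball (0::'a) (R + 2 * norm b)"
  have "compact ((\<lambda>x. W x b) ` L)"
    unfolding L_def by (rule compact_continuous_image) (auto intro: continuous_on_subset[OF c])
  then obtain B where B: "\<And>y. y \<in> L \<Longrightarrow> \<bar>W y b\<bar> \<le> B"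
    using compact_imp_bounded bounded_iff by (metis image_eqI real_norm_def)
  define h where "h n = inverse (real (Suc n))" for n
  have h01: "0 < h n" "h n \<le> 1" for n by (auto simp: h_def field_simps)
  define s where "s n x = (w (h n *\<^sub>R b + x) - w x) / h n" for n x
  define M where "M = cball (0::'a) (R + norm b)"
  have phid: "((\<lambda>\<tau>. w (x + \<tau> *\<^sub>R b)) has_real_derivative W (x + \<tau> *\<^sub>R b) b) (at \<tau>)" for x \<tau>
  proof -
    have p: "((\<lambda>\<tau>. x + \<tau> *\<^sub>R b) has_derivative (\<lambda>t. t *\<^sub>R b)) (at \<tau>)"
      by (auto intro!: derivative_eq_intros)
    have lin: "linear (W (x + \<tau> *\<^sub>R b))" using d has_derivative_linear by blast
    from has_derivative_compose[OF p d]
    show ?thesis unfolding has_field_derivative_def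
      using linear_cmul[OF lin] by (simp add: mult.commute[of _ "W (x + \<tau> *\<^sub>R b) b"])
  qed
  have bound: "\<bar>s n x\<bar> \<le> indicator M x * B" for n x
  proof (cases "x \<in> M")
    case False
    then have nx: "norm x > R + norm b" by (simp add: M_def)
    have "norm (h n *\<^sub>R b + x) \<ge> norm x - norm (h n *\<^sub>R b)" by (metis add.commute norm_diff_ineq diff_minus_eq_add norm_minus_cancel)
    moreover have "norm (h n *\<^sub>R b) \<le> norm b" using h01[of n] by (simp add: mult_left_le_one_le)
    ultimately have "norm (h n *\<^sub>R b + x) > R" using nx by linarith
    then have "h n *\<^sub>R b + x \<notin> K" using R0(1) by force
    moreover have "x \<notin> K" using R0(1)[of x] nx norm_ge_zero[of b] by (cases "x \<in> K") auto
    ultimately show ?thesis using False z by (simp add: s_def)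
  next
    case True
    obtain \<tau> where \<tau>: "0 < \<tau>" "\<tau> < h n"
      "w (x + h n *\<^sub>R b) - w (x + 0 *\<^sub>R b) = (h n - 0) * W (x + \<tau> *\<^sub>R b) b"
      using MVT2[of 0 "h n" "\<lambda>\<tau>. w (x + \<tau> *\<^sub>R b)" "\<lambda>\<tau>. W (x + \<tau> *\<^sub>R b) b"] h01[of n] phid by auto
    have "norm (x + \<tau> *\<^sub>R b) \<le> norm x + \<tau> * norm b" using \<tau> norm_triangle_ineq[of x "\<tau> *\<^sub>R b"] by simp
    also have "\<dots> \<le> (R + norm b) + 1 * norm b"
      using True \<tau> h01[of n] by (intro add_mono mult_right_mono) (auto simp: M_def)
    finally have "x + \<tau> *\<^sub>R b \<in> L" by (simp add: L_def)
    then have "\<bar>W (x + \<tau> *\<^sub>R b) b\<bar> \<le> B" by (rule B)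
    moreover have "s n x = W (x + \<tau> *\<^sub>R b) b" using \<tau> h01[of n] by (simp add: s_def add.commute)
    ultimately show ?thesis using True by simp
  qed
  have lim: "(\<lambda>n. s n x) \<longlonglongrightarrow> W x b" for x
  proof -
    have A: "((\<lambda>y. (w (x + y *\<^sub>R b) - w (x + 0 *\<^sub>R b)) / (y - 0)) \<longlongrightarrow> W (x + 0 *\<^sub>R b) b) (at 0)"
      using phid[of x 0] by (simp only: has_field_derivative_iff)
    have B: "filterlim h (at 0) sequentially"
      unfolding h_def using LIMSEQ_inverse_real_of_nat
      by (intro filterlim_atI) auto
    note filterlim_compose[OF A B]
    then show ?thesis by (simp add: s_def o_def add.commute)
  qed
  have s0: "integral\<^sup>L lborel (s n) = 0" for n
  proof -
    have wci: "integrable lborel (\<lambda>x. w (h n *\<^sub>R b + x))"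
    proof (rule cont_cs_integrable[where K="(+) (- (h n *\<^sub>R b)) ` K"])
      show "continuous_on UNIV (\<lambda>x. w (h n *\<^sub>R b + x))"
        by (intro continuous_on_compose2[OF wc]) (auto intro!: continuous_intros)
      show "compact ((+) (- (h n *\<^sub>R b)) ` K)" using K by (rule compact_translation)
      fix x assume "x \<notin> (+) (- (h n *\<^sub>R b)) ` K"
      then have "h n *\<^sub>R b + x \<notin> K" by (metis add_minus_cancel image_eqI)
      then show "w (h n *\<^sub>R b + x) = 0" by (rule z)
    qed
    have "integral\<^sup>L lborel (s n) = (integral\<^sup>L lborel (\<lambda>x. w (h n *\<^sub>R b + x)) - integral\<^sup>L lborel w) / h n"
      unfolding s_def using wci wi by simp
    then show ?thesis using int_shift[OF wc] by simp
  qed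
  have "(\<lambda>n. integral\<^sup>L lborel (s n)) \<longlonglongrightarrow> integral\<^sup>L lborel (\<lambda>x. W x b)"
  proof (rule integral_dominated_convergence[where w="\<lambda>x. indicator M x * B"])
    show "(\<lambda>x. W x b) \<in> borel_measurable lborel" using c by (simp add: borel_measurable_continuous_onI)
    show "s n \<in> borel_measurable lborel" for n
    proof -
      have "continuous_on UNIV (\<lambda>x. w (h n *\<^sub>R b + x))"
        by (intro continuous_on_compose2[OF wc]) (auto intro!: continuous_intros)
      then have "continuous_on UNIV (s n)" unfolding s_def using wc h01[of n]
        by (intro continuous_intros) auto
      then show ?thesis by (simp add: borel_measurable_continuous_onI)
    qed
    show "integrable lborel (\<lambda>x. indicator M x * B)"
      using borel_integrable_compact[of M "\<lambda>_. B"] by (simp add: M_def mult.commute)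
    show "AE x in lborel. (\<lambda>n. s n x) \<longlonglongrightarrow> W x b" using lim by simp
    show "AE x in lborel. norm (s n x) \<le> indicator M x * B" for n using bound by simp
  qed
  then show ?thesis using s0 by (simp add: LIMSEQ_const_iff)
qed



lemma tf_props:
  assumes "test_fun \<Omega> u"
  shows "\<And>x. u differentiable (at x)" "continuous_on UNIV u" "\<And>b. b \<in> Basis \<Longrightarrow> continuous_on UNIV (pderiv b u)"
  using assms unfolding test_fun_def smooth_def by (metis Ck.simps(1) Ck.simps(2) One_nat_def)+

lemma tf_zero: "x \<notin> closure {x. u x \<noteq> 0} \<Longrightarrow> u x = (0::real)"
proof (rule ccontr)
  assume "x \<notin> closure {x. u x \<noteq> 0}" "u x \<noteq> 0"
  then show False using closure_subset[of "{x. u x \<noteq> 0}"] by auto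
qed

lemma pderiv_zero_out:
  fixes u :: "'a::euclidean_space \<Rightarrow> real"
  assumes "x \<notin> closure {x. u x \<noteq> 0}"
  shows "pderiv b u x = 0"
proof -
  have "((\<lambda>x. 0) has_derivative (\<lambda>v. 0)) (at x)" by simp
  then have "(u has_derivative (\<lambda>v. 0)) (at x)"
    by (rule has_derivative_transform_within_open[where s="- closure {x. u x \<noteq> 0}"])
       (use assms tf_zero in auto)
  then show ?thesis unfolding pderiv_def using frechet_derivative_at by metis
qed

lemma tf_pderiv:
  assumes "test_fun \<Omega> u" "b \<in> Basis"
  shows "test_fun \<Omega> (pderiv b u)"
proof -
  have sm: "smooth (pderiv b u)"
    using assms unfolding test_fun_def smooth_def by (metis Ck.simps(2))
  have sub: "{x. pderiv b u x \<noteq> 0} \<subseteq> closure {x. u x \<noteq> 0}"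
    using pderiv_zero_out by blast
  have c: "closure {x. pderiv b u x \<noteq> 0} \<subseteq> closure {x. u x \<noteq> 0}"
    by (rule closure_minimal[OF sub]) simp
  have "bounded {x. pderiv b u x \<noteq> 0}"
    using assms(1) sub unfolding test_fun_def by (meson bounded_subset compact_imp_bounded)
  then show ?thesis using sm c assms(1) unfolding test_fun_def
    by (auto simp: compact_closure)
qed

lemma open_lebesgue: "open \<Omega> \<Longrightarrow> \<Omega> \<in> sets lebesgue"
  using borel_open by simp

lemma on_Omega:
  fixes g :: "'a::euclidean_space \<Rightarrow> real"
  assumes "open \<Omega>" "continuous_on UNIV g" "compact K" "K \<subseteq> \<Omega>" "\<And>x. x \<notin> K \<Longrightarrow> g x = 0"
  shows "integrable (lebesgue_on \<Omega>) g" "integral\<^sup>L (lebesgue_on \<Omega>) g = integral\<^sup>L lborel g"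
    "integrable lborel g"
proof -
  have il: "integrable lborel g" using cont_cs_integrable assms(2,3,5) by blast
  have m: "g \<in> borel_measurable lborel" using assms(2) by (simp add: borel_measurable_continuous_onI)
  have eq: "(\<lambda>x. indicator \<Omega> x *\<^sub>R g x) = g"
    using assms(4,5) by (auto simp: fun_eq_iff indicator_def)
  have O: "\<Omega> \<inter> space lebesgue \<in> sets lebesgue" using open_lebesgue[OF assms(1)] by simp
  show "integrable (lebesgue_on \<Omega>) g"
    unfolding integrable_restrict_space[OF O] eq using integrable_completion[OF m] il by simp
  show "integral\<^sup>L (lebesgue_on \<Omega>) g = integral\<^sup>L lborel g"
    unfolding integral_restrict_space[OF O] eq using integral_completion[OF m] by simp
  show "integrable lborel g" by (rule il)
qed

lemma tf_L2:
  assumes "open \<Omega>" "test_fun \<Omega> u"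
  shows "L2 \<Omega> u"
proof -
  let ?K = "closure {x. u x \<noteq> 0}"
  have K: "compact ?K" "?K \<subseteq> \<Omega>" using assms(2) by (auto simp: test_fun_def)
  have c: "continuous_on UNIV u" using tf_props[OF assms(2)] by blast
  have "integrable (lebesgue_on \<Omega>) u"
    by (rule on_Omega(1)[OF assms(1) c K]) (rule tf_zero)
  moreover have "integrable (lebesgue_on \<Omega>) (\<lambda>x. (u x)^2)"
    by (rule on_Omega(1)[OF assms(1) _ K]) (use c tf_zero in \<open>auto intro!: continuous_intros\<close>)
  ultimately show ?thesis unfolding L2_def by auto
qed

lemma tf_weak:
  assumes O: "open \<Omega>" and u: "test_fun \<Omega> u" and b: "b \<in> Basis"
  shows "weak_pderiv \<Omega> b u (pderiv b u)"
  unfolding weak_pderiv_def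
proof (intro allI impI)
  fix \<phi> assume \<phi>: "test_fun \<Omega> \<phi>"
  let ?K = "closure {x. \<phi> x \<noteq> 0}"
  have K: "compact ?K" "?K \<subseteq> \<Omega>" using \<phi> by (auto simp: test_fun_def)
  note up = tf_props[OF u] and pp = tf_props[OF \<phi>]
  define g1 where "g1 x = u x * pderiv b \<phi> x" for x
  define g2 where "g2 x = pderiv b u x * \<phi> x" for x
  have c1: "continuous_on UNIV g1" unfolding g1_def using up pp b by (intro continuous_intros) auto
  have c2: "continuous_on UNIV g2" unfolding g2_def using up pp b by (intro continuous_intros) auto
  have z1: "g1 x = 0" if "x \<notin> ?K" for x unfolding g1_def using pderiv_zero_out[OF that] by simp
  have z2: "g2 x = 0" if "x \<notin> ?K" for x unfolding g2_def using tf_zero[OF that] by simp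
  note i1 = on_Omega[OF O c1 K z1] and i2 = on_Omega[OF O c2 K z2]
  define W where "W x v = u x * frechet_derivative \<phi> (at x) v + frechet_derivative u (at x) v * \<phi> x" for x v
  have d: "((\<lambda>x. u x * \<phi> x) has_derivative W x) (at x)" for x
    unfolding W_def using up(1)[of x] pp(1)[of x]
    by (auto intro!: derivative_eq_intros simp: frechet_derivative_works[symmetric])
  have Wb: "(\<lambda>x. W x b) = (\<lambda>x. g1 x + g2 x)"
    by (auto simp: W_def g1_def g2_def pderiv_def fun_eq_iff)
  have "integral\<^sup>L lborel (\<lambda>x. W x b) = 0"
  proof (rule int_deriv_zero[OF d _ K(1)])
    show "continuous_on UNIV (\<lambda>x. W x b)" unfolding Wb by (intro continuous_on_add c1 c2)
  next
    fix x assume "x \<notin> ?K"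
    then show "u x * \<phi> x = 0" using tf_zero[of x \<phi>] by simp
  qed
  then have "integral\<^sup>L lborel g1 + integral\<^sup>L lborel g2 = 0"
    using Wb i1(3) i2(3) by simp
  then show "integrable (lebesgue_on \<Omega>) (\<lambda>x. u x * pderiv b \<phi> x) \<and>
       integrable (lebesgue_on \<Omega>) (\<lambda>x. pderiv b u x * \<phi> x) \<and>
       (\<integral>x. u x * pderiv b \<phi> x \<partial>lebesgue_on \<Omega>) = - (\<integral>x. pderiv b u x * \<phi> x \<partial>lebesgue_on \<Omega>)"
    using i1 i2 unfolding g1_def[abs_def] g2_def[abs_def] by simp
qed

lemma tf_H1:
  assumes O: "open \<Omega>" and u: "test_fun \<Omega> u"
  shows "H1 \<Omega> u"
  unfolding H1_def
proof (intro conjI ballI)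
  show "L2 \<Omega> u" by (rule tf_L2[OF O u])
  fix b :: 'a assume b: "b \<in> Basis"
  show "\<exists>g. L2 \<Omega> g \<and> weak_pderiv \<Omega> b u g"
    by (intro exI[of _ "pderiv b u"] conjI tf_L2[OF O tf_pderiv[OF u b]] tf_weak[OF O u b])
qed

lemma tf_H2:
  assumes O: "open \<Omega>" and u: "test_fun \<Omega> u"
  shows "H2 \<Omega> u"
  unfolding H2_def
proof (intro conjI ballI)
  show "L2 \<Omega> u" by (rule tf_L2[OF O u])
  fix b :: 'a assume b: "b \<in> Basis"
  note ub = tf_pderiv[OF u b]
  show "\<exists>g. L2 \<Omega> g \<and> weak_pderiv \<Omega> b u g \<and> (\<forall>c\<in>Basis. \<exists>h. L2 \<Omega> h \<and> weak_pderiv \<Omega> c g h)"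
  proof -
    have "\<forall>c\<in>Basis. \<exists>h. L2 \<Omega> h \<and> weak_pderiv \<Omega> c (pderiv b u) h"
    proof
      fix c :: 'a assume c: "c \<in> Basis"
      show "\<exists>h. L2 \<Omega> h \<and> weak_pderiv \<Omega> c (pderiv b u) h"
        using tf_L2[OF O tf_pderiv[OF ub c]] tf_weak[OF O ub c] by blast
    qed
    then show ?thesis using tf_L2[OF O ub] tf_weak[OF O u b] by blast
  qed
qed

lemma tf_H10:
  assumes O: "open \<Omega>" and u: "test_fun \<Omega> u"
  shows "H10 \<Omega> u"
  unfolding H10_def
proof (intro conjI tf_H1[OF O u] exI[of _ "\<lambda>k. u"] allI ballI)
  show "test_fun \<Omega> u" for k :: nat by (rule u)
  show "(\<lambda>k. \<integral>x. (u x - u x)\<^sup>2 \<partial>lebesgue_on \<Omega>) \<longlonglongrightarrow> 0" by simp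
  fix b :: 'a assume b: "b \<in> Basis"
  show "\<exists>g. L2 \<Omega> g \<and> weak_pderiv \<Omega> b u g \<and>
          (\<lambda>k. \<integral>x. (pderiv b u x - g x)\<^sup>2 \<partial>lebesgue_on \<Omega>) \<longlonglongrightarrow> 0"
    by (intro exI[of _ "pderiv b u"] conjI tf_L2[OF O tf_pderiv[OF u b]] tf_weak[OF O u b]) simp
qed



theorem theorem3p1:
  fixes \<Omega> :: "'a::euclidean_space set" and p :: ennreal and f :: "real \<Rightarrow> real" and M :: real
  assumes "open \<Omega>" and "connected \<Omega>" and "\<Omega> \<noteq> {}"
    and "1 \<le> p"
    and "\<And>u. H2 \<Omega> u \<Longrightarrow> H10 \<Omega> u \<Longrightarrow> Lp p \<Omega> (f \<circ> u)"
    and "M > 0"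
    and "\<And>u. H2 \<Omega> u \<Longrightarrow> H10 \<Omega> u \<Longrightarrow> Lp_norm p \<Omega> (f \<circ> u) \<le> M"
  shows "\<exists>C>0. \<forall>x. \<bar>f x\<bar> \<le> C"
proof -
  note O = assms(1)
  obtain a where a: "a \<in> \<Omega>" using assms(3) by blast
  obtain r where r: "r > 0" "cball a r \<subseteq> \<Omega>" using open_contains_cball O a by blast
  define u where "u t = bump a ((r/2)^2) (r^2) t" for t
  have tf: "test_fun \<Omega> (u t)" for t unfolding u_def by (rule bump_test[OF r])
  have Lp: "Lp p \<Omega> (f \<circ> u t)" and LpM: "Lp_norm p \<Omega> (f \<circ> u t) \<le> M" for t
    using assms(5,7) tf_H2[OF O tf] tf_H10[OF O tf] by blast+
  define S where "S = cball a (r/2)"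
  have SO: "S \<subseteq> \<Omega>" using r unfolding S_def using r(1) by (intro order_trans[OF _ r(2)]) (auto simp: subset_iff)
  have uS: "u t x = t" if "x \<in> S" for t x
  proof -
    have "norm (x - a) \<le> r/2" using that by (simp add: S_def dist_norm norm_minus_commute)
    then have "(norm (x - a))^2 \<le> (r/2)^2" by (simp add: power_mono)
    moreover have "(r/2)^2 < r^2" using r(1) by (simp add: power_divide)
    ultimately show ?thesis unfolding u_def by (intro bump_one) (auto simp: rho_eq)
  qed
  have Sl: "S \<in> sets lebesgue" "S \<in> sets lborel" unfolding S_def by auto
  define V where "V = measure lebesgue S"
  have V: "V > 0" unfolding V_def S_def using content_cball_pos[of "r/2" a] r(1) by simp
  have Ofin: "emeasure lebesgue S < \<infinity>" unfolding S_def using emeasure_lborel_cball_finite by simp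
  have OL: "\<Omega> \<inter> space lebesgue \<in> sets lebesgue" using open_lebesgue[OF O] by simp
  show ?thesis
  proof (cases "p = \<infinity>")
    case True
    have "\<bar>f t\<bar> \<le> M" for t
    proof -
      let ?A = "{C. 0 \<le> C \<and> (AE x in lebesgue_on \<Omega>. \<bar>(f \<circ> u t) x\<bar> \<le> C)}"
      obtain C0 where C0: "AE x in lebesgue_on \<Omega>. \<bar>(f \<circ> u t) x\<bar> \<le> C0"
        using Lp[of t] True by (auto simp: Lp_def)
      have ne: "max C0 0 \<in> ?A" using C0 by (auto elim!: AE_mp)
      have lb: "\<bar>f t\<bar> \<le> C" if "C \<in> ?A" for C
      proof (rule ccontr)
        assume "\<not> \<bar>f t\<bar> \<le> C"
        then have "\<forall>x\<in>S. \<not> \<bar>(f \<circ> u t) x\<bar> \<le> C" using uS by auto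
        moreover have "AE x in lebesgue. x \<in> \<Omega> \<longrightarrow> \<bar>(f \<circ> u t) x\<bar> \<le> C"
          using that AE_restrict_space_iff[OF OL] by auto
        ultimately have "AE x in lebesgue. x \<notin> S" using SO by (auto elim!: AE_mp)
        then have "emeasure lebesgue S = 0" using AE_iff_measurable[OF Sl(1), of "\<lambda>x. x \<notin> S"] by auto
        then have "V = 0" by (simp add: V_def measure_def)
        then show False using V by simp
      qed
      have "?A \<noteq> {}" using ne by blast
      then have "\<bar>f t\<bar> \<le> Inf ?A" using lb by (rule cInf_greatest)
      also have "\<dots> = Lp_norm p \<Omega> (f \<circ> u t)" using True by (simp add: Lp_norm_def)
      finally show ?thesis using LpM[of t] by simp
    qed
    then show ?thesis using assms(6) by blast
  next
    case False
    define q where "q = enn2real p"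
    have pt: "p < top" using False by (metis infinity_ennreal_def top.not_eq_extremum)
    have q1: "q \<ge> 1" unfolding q_def using enn2real_mono[OF assms(4) pt] by simp
    have "\<bar>f t\<bar> \<le> M / V powr (1/q)" for t
    proof -
      let ?G = "\<lambda>x. \<bar>(f \<circ> u t) x\<bar> powr q"
      have Gi: "integrable (lebesgue_on \<Omega>) ?G" using Lp[of t] False by (simp add: Lp_def q_def)
      have ii: "integrable (lebesgue_on \<Omega>) (\<lambda>x. indicator S x * \<bar>f t\<bar> powr q)"
        using Ofin Sl SO by (intro integrable_mult_left integrable_real_indicator)
          (auto simp: sets_restrict_space_iff[OF OL] emeasure_restrict_space[OF OL])
      have "integral\<^sup>L (lebesgue_on \<Omega>) (\<lambda>x. indicator S x * \<bar>f t\<bar> powr q) \<le> integral\<^sup>L (lebesgue_on \<Omega>) ?G"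
        by (rule integral_mono[OF ii Gi]) (auto simp: indicator_def uS)
      moreover have mS: "measure (lebesgue_on \<Omega>) (S \<inter> \<Omega>) = V"
        using SO by (simp add: V_def measure_restrict_space[OF OL] Int_absorb2)
      ultimately have I: "V * \<bar>f t\<bar> powr q \<le> integral\<^sup>L (lebesgue_on \<Omega>) ?G" by simp
      have "(V * \<bar>f t\<bar> powr q) powr (1/q) \<le> (integral\<^sup>L (lebesgue_on \<Omega>) ?G) powr (1/q)"
        using I V q1 by (intro powr_mono2) auto
      also have "\<dots> = Lp_norm p \<Omega> (f \<circ> u t)" using False by (simp add: Lp_norm_def q_def)
      also have "\<dots> \<le> M" by (rule LpM)
      finally have "V powr (1/q) * \<bar>f t\<bar> \<le> M"
        using V q1 by (simp add: powr_mult powr_powr)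
      then show ?thesis using V by (simp add: field_simps)
    qed
    moreover have "M / V powr (1/q) > 0" using assms(6) V by simp
    ultimately show ?thesis by blast
  qed
qed


end
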